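(* Let $G_1$, $G_2$ be graphs. Then $G_1$ and $G_2$ have the same spectra with respect to $A$ and with respect to $\bar A$ if and only if $G_1^*$ and $G_2^*$ have the same spectra with respect to $A$ and with respect to $\bar A$; and the same holds with $A,\bar A$ replaced by $|L|, \overline{|L|}$. Similarly, $\phi_{ADJ}^{G_1}=\phi_{ADJ}^{G_2}$ if and only if $\phi_{ADJ}^{G_1^*}=\phi_{ADJ}^{G_2^*}$.
   Context: Graphs are finite and simple. For a graph, $A$ and $D$ are its adjacency and degree matrices, $|L| = D+A$ is its signless Laplacian; $\bar A$ and $\overline{|L|}$ denote the adjacency matrix and signless Laplacian of its complement. The cone $G^*$ is the join of $G$ with a single vertex, i.e., $G$ plus a new vertex adjacent to all vertices of $G$. The generalized characteristic polynomial of $G$ is $\phi^G_{ADJ}(\lambda,x,y)=\det(\lambda I - A + xD + yJ)$, where $J$ is the all-ones matrix. *)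

theory Defs
  imports "Jordan_Normal_Form.Determinant" "Jordan_Normal_Form.Char_Poly"
begin

text \<open>A finite simple graph on vertex set {0..<n} is given by its order n and an
  edge relation E that is symmetric and irreflexive on {0..<n}
  (values of E outside {0..<n} are irrelevant).\<close>

definition is_graph :: "nat \<Rightarrow> (nat \<Rightarrow> nat \<Rightarrow> bool) \<Rightarrow> bool" where
  "is_graph n E \<longleftrightarrow> (\<forall>i<n. \<forall>j<n. (E i j \<longleftrightarrow> E j i) \<and> \<not> E i i)"

definition compl_graph :: "(nat \<Rightarrow> nat \<Rightarrow> bool) \<Rightarrow> nat \<Rightarrow> nat \<Rightarrow> bool" where
  "compl_graph E i j \<longleftrightarrow> i \<noteq> j \<and> \<not> E i j"

definition cone_graph :: "nat \<Rightarrow> (nat \<Rightarrow> nat \<Rightarrow> bool) \<Rightarrow> nat \<Rightarrow> nat \<Rightarrow> bool" where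
  "cone_graph n E i j \<longleftrightarrow> (i < n \<and> j < n \<and> E i j) \<or> (i = n \<and> j < n) \<or> (i < n \<and> j = n)"

definition adj_mat :: "nat \<Rightarrow> (nat \<Rightarrow> nat \<Rightarrow> bool) \<Rightarrow> real mat" where
  "adj_mat n E = mat n n (\<lambda>(i,j). if E i j then 1 else 0)"

definition degree :: "nat \<Rightarrow> (nat \<Rightarrow> nat \<Rightarrow> bool) \<Rightarrow> nat \<Rightarrow> nat" where
  "degree n E i = card {j. j < n \<and> E i j}"

definition deg_mat :: "nat \<Rightarrow> (nat \<Rightarrow> nat \<Rightarrow> bool) \<Rightarrow> real mat" where
  "deg_mat n E = mat n n (\<lambda>(i,j). if i = j then real (degree n E i) else 0)"

definition signless_lap :: "nat \<Rightarrow> (nat \<Rightarrow> nat \<Rightarrow> bool) \<Rightarrow> real mat" where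
  "signless_lap n E = deg_mat n E + adj_mat n E"

definition ones_mat :: "nat \<Rightarrow> real mat" where
  "ones_mat n = mat n n (\<lambda>_. 1)"

definition gen_char_poly :: "nat \<Rightarrow> (nat \<Rightarrow> nat \<Rightarrow> bool) \<Rightarrow> real \<Rightarrow> real \<Rightarrow> real \<Rightarrow> real" where
  "gen_char_poly n E lam x y =
     det (lam \<cdot>\<^sub>m 1\<^sub>m n - adj_mat n E + x \<cdot>\<^sub>m deg_mat n E + y \<cdot>\<^sub>m ones_mat n)"

text \<open>Two matrices have the same spectrum (eigenvalues with multiplicities) iff they
  have the same characteristic polynomial.\<close>
definition cospectral :: "real mat \<Rightarrow> real mat \<Rightarrow> bool" where
  "cospectral M N \<longleftrightarrow> char_poly M = char_poly N"

end

theory Submission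
  imports Defs
begin

definition bord :: "real mat \<Rightarrow> real \<Rightarrow> real \<Rightarrow> real \<Rightarrow> real mat" where
"bord M a b c = mat (Suc (dim_row M)) (Suc (dim_row M)) (\<lambda>(i,j). if i < dim_row M then (if j < dim_row M then M $$ (i,j) else a) else (if j < dim_row M then b else c))"

lemma bord_carrier: "M \<in> carrier_mat n n \<Longrightarrow> bord M a b c \<in> carrier_mat (Suc n) (Suc n)"
  unfolding bord_def by auto

definition Rr :: "real mat \<Rightarrow> real \<Rightarrow> real" where
 "Rr M a = (\<Sum>j<dim_row M. cofactor (bord M a 0 0) (dim_row M) j)"
definition Rc :: "real mat \<Rightarrow> real \<Rightarrow> real" where
 "Rc M b = (\<Sum>i<dim_row M. cofactor (bord M 0 b 0) i (dim_row M))"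

lemma bord_row: assumes M: "M \<in> carrier_mat n n"
  shows "det (bord M a b c) = b * Rr M a + c * det M"
proof -
  have dn: "dim_row M = n" using M by auto
  have "det (bord M a b c) = (\<Sum>j<Suc n. bord M a b c $$ (n,j) * cofactor (bord M a b c) n j)"
    by (rule laplace_expansion_row[OF bord_carrier[OF M]], simp)
  also have "\<dots> = (\<Sum>j<n. b * cofactor (bord M a 0 0) n j) + c * cofactor (bord M a b c) n n"
  proof -
    have "\<And>j. j < n \<Longrightarrow> mat_delete (bord M a b c) n j = mat_delete (bord M a 0 0) n j"
      unfolding mat_delete_def bord_def using M by (intro eq_matI) auto
    hence "\<And>j. j < n \<Longrightarrow> bord M a b c $$ (n,j) * cofactor (bord M a b c) n j = b * cofactor (bord M a 0 0) n j"
      unfolding cofactor_def using M by (simp add: bord_def)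
    moreover have "bord M a b c $$ (n,n) = c" using M by (simp add: bord_def)
    ultimately show ?thesis by simp
  qed
  also have "cofactor (bord M a b c) n n = det M"
  proof -
    have "mat_delete (bord M a b c) n n = M"
      unfolding mat_delete_def bord_def using M by (intro eq_matI) auto
    thus ?thesis unfolding cofactor_def by (simp flip: mult_2)
  qed
  finally show ?thesis unfolding Rr_def dn by (simp add: sum_distrib_left)
qed

lemma bord_col: assumes M: "M \<in> carrier_mat n n"
  shows "det (bord M a b c) = a * Rc M b + c * det M"
proof -
  have dn: "dim_row M = n" using M by auto
  have "det (bord M a b c) = (\<Sum>i<Suc n. bord M a b c $$ (i,n) * cofactor (bord M a b c) i n)"
    by (rule laplace_expansion_column[OF bord_carrier[OF M]], simp)
  also have "\<dots> = (\<Sum>i<n. a * cofactor (bord M 0 b 0) i n) + c * cofactor (bord M a b c) n n"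
  proof -
    have "\<And>i. i < n \<Longrightarrow> mat_delete (bord M a b c) i n = mat_delete (bord M 0 b 0) i n"
      unfolding mat_delete_def bord_def using M by (intro eq_matI) auto
    hence "\<And>i. i < n \<Longrightarrow> bord M a b c $$ (i,n) * cofactor (bord M a b c) i n = a * cofactor (bord M 0 b 0) i n"
      unfolding cofactor_def using M by (simp add: bord_def)
    moreover have "bord M a b c $$ (n,n) = c" using M by (simp add: bord_def)
    ultimately show ?thesis by simp
  qed
  also have "cofactor (bord M a b c) n n = det M"
  proof -
    have "mat_delete (bord M a b c) n n = M"
      unfolding mat_delete_def bord_def using M by (intro eq_matI) auto
    thus ?thesis unfolding cofactor_def by (simp flip: mult_2)
  qed
  finally show ?thesis unfolding Rc_def dn by (simp add: sum_distrib_left)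
qed

definition TT :: "real mat \<Rightarrow> real" where "TT M = det (bord M 1 1 0)"

lemma bord_det: assumes M: "M \<in> carrier_mat n n"
  shows "det (bord M a b c) = a * b * TT M + c * det M"
proof -
  have key: "b * Rr M a = a * Rc M b" for a b
    using bord_row[OF M, of a b 0] bord_col[OF M, of a b 0] by simp
  have "Rr M 1 = Rc M 1" using key[of 1 1] by simp
  have "TT M = Rr M 1" unfolding TT_def using bord_row[OF M, of 1 1 0] by simp
  have "Rr M a = a * Rc M 1" using key[of 1 a] by simp
  thus ?thesis using bord_row[OF M, of a b c] \<open>Rr M 1 = Rc M 1\<close> \<open>TT M = Rr M 1\<close> by simp
qed


lemma ones_dims[simp]: "dim_row (ones_mat n) = n" "dim_col (ones_mat n) = n" "ones_mat n \<in> carrier_mat n n"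
  by (auto simp: ones_mat_def)

lemma bord_prod: assumes M: "M \<in> carrier_mat n n"
  shows "bord (1\<^sub>m n) 1 0 1 * bord (M - t \<cdot>\<^sub>m ones_mat n) 0 t 1 = bord M 1 t 1"
proof (rule eq_matI)
  fix i j assume i: "i < dim_row (bord M 1 t 1)" and j: "j < dim_col (bord M 1 t 1)"
  have i': "i < Suc n" and j': "j < Suc n" using i j M by (auto simp: bord_def)
  have "(bord (1\<^sub>m n) 1 0 1 * bord (M - t \<cdot>\<^sub>m ones_mat n) 0 t 1) $$ (i,j)
     = (\<Sum>k\<in>{0..<Suc n}. bord (1\<^sub>m n) 1 0 1 $$ (i,k) * bord (M - t \<cdot>\<^sub>m ones_mat n) 0 t 1 $$ (k,j))"
    using i' j' M by (simp add: bord_def scalar_prod_def)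
  also have "\<dots> = (\<Sum>k\<in>{0..<n}. bord (1\<^sub>m n) 1 0 1 $$ (i,k) * bord (M - t \<cdot>\<^sub>m ones_mat n) 0 t 1 $$ (k,j))
       + bord (1\<^sub>m n) 1 0 1 $$ (i,n) * bord (M - t \<cdot>\<^sub>m ones_mat n) 0 t 1 $$ (n,j)"
    by simp
  also have "\<dots> = bord M 1 t 1 $$ (i,j)"
  proof (cases "i < n")
    case True
    have "(\<Sum>k\<in>{0..<n}. bord (1\<^sub>m n) 1 0 1 $$ (i,k) * bord (M - t \<cdot>\<^sub>m ones_mat n) 0 t 1 $$ (k,j))
        = (\<Sum>k\<in>{0..<n}. if k = i then bord (M - t \<cdot>\<^sub>m ones_mat n) 0 t 1 $$ (i,j) else 0)"
      by (rule sum.cong, insert True M, auto simp: bord_def)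
    also have "\<dots> = bord (M - t \<cdot>\<^sub>m ones_mat n) 0 t 1 $$ (i,j)" using True by simp
    finally show ?thesis using True j' M by (auto simp: bord_def ones_mat_def)
  next
    case False
    hence "i = n" using i' by auto
    thus ?thesis using j' M by (auto simp: bord_def ones_mat_def)
  qed
  finally show "(bord (1\<^sub>m n) 1 0 1 * bord (M - t \<cdot>\<^sub>m ones_mat n) 0 t 1) $$ (i,j) = bord M 1 t 1 $$ (i,j)" .
qed (insert M, auto simp: bord_def)

lemma det_minus_J: assumes M: "M \<in> carrier_mat n n"
  shows "det (M - t \<cdot>\<^sub>m ones_mat n) = det M + t * TT M"
proof -
  have MJ: "M - t \<cdot>\<^sub>m ones_mat n \<in> carrier_mat n n" using M by (auto simp: ones_mat_def)
  have "det (bord M 1 t 1) = det (bord (1\<^sub>m n) 1 0 1) * det (bord (M - t \<cdot>\<^sub>m ones_mat n) 0 t 1)"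
    by (subst bord_prod[OF M, symmetric], rule det_mult[of _ "Suc n"], auto intro!: bord_carrier MJ)
  also have "det (bord (1\<^sub>m n) 1 0 1) = 1" by (subst bord_det[of _ n], auto)
  finally show ?thesis using bord_det[OF M, of 1 t 1] bord_det[OF MJ, of 0 t 1] by simp
qed


lemma det_uminus: assumes "X \<in> carrier_mat n n" shows "det (- X) = (-1)^n * det (X :: real mat)"
proof -
  have "- X = (-1) \<cdot>\<^sub>m X" using assms by (intro eq_matI) auto
  thus ?thesis using assms by simp
qed

lemma TT_neg: assumes M: "M \<in> carrier_mat n n"
  shows "TT (- M) = - ((-1)^n * TT M)"
proof -
  have e: "- M - 1 \<cdot>\<^sub>m ones_mat n = - (M - (-1) \<cdot>\<^sub>m ones_mat n)" using M by (intro eq_matI) auto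
  have "det (- M - 1 \<cdot>\<^sub>m ones_mat n) = det (- M) + TT (- M)"
    using det_minus_J[of "- M" n 1] M by simp
  also have "det (- M - 1 \<cdot>\<^sub>m ones_mat n) = (-1)^n * det (M - (-1) \<cdot>\<^sub>m ones_mat n)"
    unfolding e by (rule det_uminus, insert M, auto)
  also have "det (M - (-1) \<cdot>\<^sub>m ones_mat n) = det M - TT M" using det_minus_J[OF M, of "-1"] by simp
  finally show ?thesis using det_uminus[OF M] by (simp add: algebra_simps)
qed

lemma TT_shift: assumes M: "M \<in> carrier_mat n n"
  shows "TT (M - y \<cdot>\<^sub>m ones_mat n) = TT M"
proof -
  have MJ: "M - y \<cdot>\<^sub>m ones_mat n \<in> carrier_mat n n" using M by auto
  have e: "M - y \<cdot>\<^sub>m ones_mat n - 1 \<cdot>\<^sub>m ones_mat n = M - (y + 1) \<cdot>\<^sub>m ones_mat n"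
    using M by (intro eq_matI) (auto simp: ones_mat_def)
  have "det (M - y \<cdot>\<^sub>m ones_mat n - 1 \<cdot>\<^sub>m ones_mat n) = det (M - y \<cdot>\<^sub>m ones_mat n) + TT (M - y \<cdot>\<^sub>m ones_mat n)"
    using det_minus_J[OF MJ, of 1] by simp
  thus ?thesis unfolding e det_minus_J[OF M] by (simp add: algebra_simps)
qed

lemma cp_eval: assumes A: "(A :: real mat) \<in> carrier_mat n n"
  shows "poly (char_poly A) y = det (y \<cdot>\<^sub>m 1\<^sub>m n - A)"
proof -
  have "- char_matrix A y = y \<cdot>\<^sub>m 1\<^sub>m n - A" using A unfolding char_matrix_def by (intro eq_matI) auto
  thus ?thesis using char_poly_matrix[OF A] by simp
qed

lemma cp_dim: assumes "(A :: real mat) \<in> carrier_mat n n" "B \<in> carrier_mat m m" "char_poly A = char_poly B"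
  shows "n = m"
  using degree_monic_char_poly[OF assms(1)] degree_monic_char_poly[OF assms(2)] assms(3) by simp

lemma poly_eq_off: fixes p q :: "real poly"
  assumes "\<And>y. y \<noteq> y0 \<Longrightarrow> poly p y = poly q y" shows "p = q"
proof (rule ccontr)
  assume "p \<noteq> q" hence "p - q \<noteq> 0" by simp
  hence f: "finite {y. poly (p - q) y = 0}" by (rule poly_roots_finite)
  have "UNIV - {y0} \<subseteq> {y. poly (p - q) y = 0}" using assms by auto
  hence "finite (UNIV - {y0} :: real set)" using f finite_subset by blast
  thus False using infinite_UNIV_char_0 by (metis Diff_infinite_finite finite.emptyI finite_insert)
qed

lemma poly_eq_all: fixes p q :: "real poly"
  assumes "\<And>y. poly p y = poly q y" shows "p = q"
  using poly_eq_off[of 0 p q] assms by blast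

lemma abstract:
  fixes pA1 pA2 pC1 pC2 pK1 pK2 pKC1 pKC2 :: "real poly" and q1 q2 t1 t2 :: "real \<Rightarrow> real" and a b c s :: real
  assumes s: "s \<noteq> 0"
  and A1: "\<And>y. poly pA1 y = q1 y" and A2: "\<And>y. poly pA2 y = q2 y"
  and C1: "\<And>y. poly pC1 y = (y - a) * q1 (y - b) + t1 (y - b)"
  and C2: "\<And>y. poly pC2 y = (y - a) * q2 (y - b) + t2 (y - b)"
  and K1: "\<And>y. poly pK1 y = s * (q1 (c - y) - t1 (c - y))"
  and K2: "\<And>y. poly pK2 y = s * (q2 (c - y) - t2 (c - y))"
  and KC1: "\<And>y. poly pKC1 y = y * poly pK1 y"
  and KC2: "\<And>y. poly pKC2 y = y * poly pK2 y"
  shows "(pA1 = pA2 \<and> pK1 = pK2) \<longleftrightarrow> (pC1 = pC2 \<and> pKC1 = pKC2)"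
proof
  assume h: "pA1 = pA2 \<and> pK1 = pK2"
  have q: "q1 y = q2 y" for y using A1 A2 h by metis
  have "s * (q1 z - t1 z) = s * (q2 z - t2 z)" for z
  proof -
    have "poly pK1 (c - z) = poly pK2 (c - z)" using h by simp
    thus ?thesis using K1 K2 by simp
  qed
  hence d0: "q1 z - t1 z = q2 z - t2 z" for z using s by simp
  have t: "t1 z = t2 z" for z using d0[of z] q[of z] by linarith
  show "pC1 = pC2 \<and> pKC1 = pKC2"
    using h by (auto intro!: poly_eq_all simp: C1 C2 KC1 KC2 q t)
next
  assume h: "pC1 = pC2 \<and> pKC1 = pKC2"
  have K: "pK1 = pK2"
    by (rule poly_eq_off[of 0], insert KC1 KC2 h, metis mult_cancel_left)
  have "s * (q1 z - t1 z) = s * (q2 z - t2 z)" for z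
  proof -
    have "poly pK1 (c - z) = poly pK2 (c - z)" using K by simp
    thus ?thesis using K1 K2 by simp
  qed
  hence d: "q1 z - t1 z = q2 z - t2 z" for z using s by simp
  have e: "(w + b - a) * q1 w + t1 w = (w + b - a) * q2 w + t2 w" for w
    using C1[of "w + b"] C2[of "w + b"] h by simp
  have f: "(w + b - a + 1) * q1 w = (w + b - a + 1) * q2 w" for w
  proof -
    have "(w + b - a + 1) * q1 w = ((w + b - a) * q1 w + t1 w) + (q1 w - t1 w)" by (simp add: algebra_simps)
    also have "\<dots> = ((w + b - a) * q2 w + t2 w) + (q2 w - t2 w)" using e[of w] d[of w] by simp
    finally show ?thesis by (simp add: algebra_simps)
  qed
  have "w \<noteq> a - b - 1 \<Longrightarrow> q1 w = q2 w" for w using f[of w] by auto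
  hence "pA1 = pA2" by (intro poly_eq_off[of "a - b - 1"]) (simp add: A1 A2)
  with K show "pA1 = pA2 \<and> pK1 = pK2" by simp
qed


lemma deg_cone_lt: "i < n \<Longrightarrow> degree (Suc n) (cone_graph n E) i = Suc (degree n E i)"
proof -
  assume i: "i < n"
  have "{j. j < Suc n \<and> cone_graph n E i j} = insert n {j. j < n \<and> E i j}"
    using i by (auto simp: cone_graph_def)
  thus ?thesis unfolding degree_def by simp
qed

lemma deg_cone_n: "degree (Suc n) (cone_graph n E) n = n"
proof -
  have "{j. j < Suc n \<and> cone_graph n E n j} = {..<n}" by (auto simp: cone_graph_def)
  thus ?thesis unfolding degree_def by simp
qed

lemma deg_compl: assumes g: "is_graph n E" and i: "i < n"
  shows "real (degree n (compl_graph E) i) = real n - 1 - real (degree n E i)"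
proof -
  have s1: "{j. j < n \<and> compl_graph E i j} = ({..<n} - {j. j < n \<and> E i j}) - {i}"
    by (auto simp: compl_graph_def)
  have "i \<in> {..<n} - {j. j < n \<and> E i j}" using g i by (auto simp: is_graph_def)
  hence c1: "card (({..<n} - {j. j < n \<and> E i j}) - {i}) = card ({..<n} - {j. j < n \<and> E i j}) - 1"
    by simp
  have c2: "card ({..<n} - {j. j < n \<and> E i j}) = n - card {j. j < n \<and> E i j}"
    by (subst card_Diff_subset, auto)
  have le: "card {j. j < n \<and> E i j} < n"
  proof -
    have "{j. j < n \<and> E i j} \<subset> {..<n}" using g i by (auto simp: is_graph_def)
    thus ?thesis using psubset_card_mono[of "{..<n}"] by auto
  qed
  show ?thesis unfolding degree_def s1 c1 c2 using le by (simp add: of_nat_diff)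
qed

lemma deg_compl_cone_lt: "i < n \<Longrightarrow> degree (Suc n) (compl_graph (cone_graph n E)) i = degree n (compl_graph E) i"
proof -
  assume i: "i < n"
  have "{j. j < Suc n \<and> compl_graph (cone_graph n E) i j} = {j. j < n \<and> compl_graph E i j}"
    using i by (auto simp: cone_graph_def compl_graph_def)
  thus ?thesis unfolding degree_def by simp
qed

lemma deg_compl_cone_n: "degree (Suc n) (compl_graph (cone_graph n E)) n = 0"
proof -
  have "{j. j < Suc n \<and> compl_graph (cone_graph n E) n j} = {}"
    by (auto simp: cone_graph_def compl_graph_def)
  thus ?thesis unfolding degree_def by simp
qed

lemma adj_carrier[simp]: "adj_mat n E \<in> carrier_mat n n" "deg_mat n E \<in> carrier_mat n n"
  "signless_lap n E \<in> carrier_mat n n"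
  by (auto simp: adj_mat_def deg_mat_def signless_lap_def)

lemma M_cone_adj: "y \<cdot>\<^sub>m 1\<^sub>m (Suc n) - adj_mat (Suc n) (cone_graph n E)
   = bord (y \<cdot>\<^sub>m 1\<^sub>m n - adj_mat n E) (-1) (-1) y"
  by (intro eq_matI) (auto simp: bord_def adj_mat_def cone_graph_def)

lemma M_compl_adj: assumes g: "is_graph n E"
  shows "y \<cdot>\<^sub>m 1\<^sub>m n - adj_mat n (compl_graph E)
   = - ((-1 - y) \<cdot>\<^sub>m 1\<^sub>m n - adj_mat n E) - 1 \<cdot>\<^sub>m ones_mat n"
  using g by (intro eq_matI) (auto simp: adj_mat_def compl_graph_def ones_mat_def is_graph_def)

lemma M_compl_cone_adj: "y \<cdot>\<^sub>m 1\<^sub>m (Suc n) - adj_mat (Suc n) (compl_graph (cone_graph n E))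
   = bord (y \<cdot>\<^sub>m 1\<^sub>m n - adj_mat n (compl_graph E)) 0 0 y"
  by (intro eq_matI) (auto simp: bord_def adj_mat_def cone_graph_def compl_graph_def)

lemma M_cone_lap: "y \<cdot>\<^sub>m 1\<^sub>m (Suc n) - signless_lap (Suc n) (cone_graph n E)
   = bord ((y - 1) \<cdot>\<^sub>m 1\<^sub>m n - signless_lap n E) (-1) (-1) (y - real n)"
  by (intro eq_matI) (auto simp: bord_def adj_mat_def deg_mat_def signless_lap_def cone_graph_def
      deg_cone_lt deg_cone_n dest: less_antisym)

lemma M_compl_lap: assumes g: "is_graph n E"
  shows "y \<cdot>\<^sub>m 1\<^sub>m n - signless_lap n (compl_graph E)
   = - ((real n - 2 - y) \<cdot>\<^sub>m 1\<^sub>m n - signless_lap n E) - 1 \<cdot>\<^sub>m ones_mat n"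
  using g by (intro eq_matI) (auto simp: adj_mat_def deg_mat_def signless_lap_def compl_graph_def
     ones_mat_def is_graph_def deg_compl)

lemma M_compl_cone_lap: "y \<cdot>\<^sub>m 1\<^sub>m (Suc n) - signless_lap (Suc n) (compl_graph (cone_graph n E))
   = bord (y \<cdot>\<^sub>m 1\<^sub>m n - signless_lap n (compl_graph E)) 0 0 y"
  by (intro eq_matI) (auto simp: bord_def adj_mat_def deg_mat_def signless_lap_def cone_graph_def
      compl_graph_def deg_compl_cone_lt deg_compl_cone_n dest: less_antisym)


lemma compl_formula: assumes X: "X \<in> carrier_mat n n"
  shows "det (- (z \<cdot>\<^sub>m 1\<^sub>m n - X) - 1 \<cdot>\<^sub>m ones_mat n) = (-1)^n * (det (z \<cdot>\<^sub>m 1\<^sub>m n - X) - TT (z \<cdot>\<^sub>m 1\<^sub>m n - X))"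
proof -
  have N: "- (z \<cdot>\<^sub>m 1\<^sub>m n - X) \<in> carrier_mat n n" "z \<cdot>\<^sub>m 1\<^sub>m n - X \<in> carrier_mat n n" using X by auto
  show ?thesis using det_minus_J[OF N(1), of 1] det_uminus[OF N(2)] TT_neg[OF N(2)]
    by (simp add: algebra_simps)
qed

lemma adj_facts: assumes g: "is_graph n E"
  shows "poly (char_poly (adj_mat n E)) y = det (y \<cdot>\<^sub>m 1\<^sub>m n - adj_mat n E)"
  and "poly (char_poly (adj_mat (Suc n) (cone_graph n E))) y
        = y * det (y \<cdot>\<^sub>m 1\<^sub>m n - adj_mat n E) + TT (y \<cdot>\<^sub>m 1\<^sub>m n - adj_mat n E)"
  and "poly (char_poly (adj_mat n (compl_graph E))) y
        = (-1)^n * (det ((-1 - y) \<cdot>\<^sub>m 1\<^sub>m n - adj_mat n E) - TT ((-1 - y) \<cdot>\<^sub>m 1\<^sub>m n - adj_mat n E))"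
  and "poly (char_poly (adj_mat (Suc n) (compl_graph (cone_graph n E)))) y
        = y * poly (char_poly (adj_mat n (compl_graph E))) y"
proof -
  have C: "y \<cdot>\<^sub>m 1\<^sub>m n - adj_mat n F \<in> carrier_mat n n" for F y by (auto simp: adj_mat_def)
  show "poly (char_poly (adj_mat n E)) y = det (y \<cdot>\<^sub>m 1\<^sub>m n - adj_mat n E)" by (rule cp_eval, simp)
  show "poly (char_poly (adj_mat (Suc n) (cone_graph n E))) y
        = y * det (y \<cdot>\<^sub>m 1\<^sub>m n - adj_mat n E) + TT (y \<cdot>\<^sub>m 1\<^sub>m n - adj_mat n E)"
    by (subst cp_eval[of _ "Suc n"], simp, unfold M_cone_adj bord_det[OF C]) simp
  have e: "y \<cdot>\<^sub>m 1\<^sub>m n - adj_mat n (compl_graph E)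
   = - ((-1 - y) \<cdot>\<^sub>m 1\<^sub>m n - adj_mat n E) - 1 \<cdot>\<^sub>m ones_mat n"
    using M_compl_adj[OF g, of y] by simp
  show "poly (char_poly (adj_mat n (compl_graph E))) y
        = (-1)^n * (det ((-1 - y) \<cdot>\<^sub>m 1\<^sub>m n - adj_mat n E) - TT ((-1 - y) \<cdot>\<^sub>m 1\<^sub>m n - adj_mat n E))"
    by (subst cp_eval[of _ n], simp, unfold e, rule compl_formula, simp)
  show "poly (char_poly (adj_mat (Suc n) (compl_graph (cone_graph n E)))) y
        = y * poly (char_poly (adj_mat n (compl_graph E))) y"
    by (subst cp_eval[of _ "Suc n"], simp, subst cp_eval[of _ n], simp, unfold M_compl_cone_adj bord_det[OF C]) simp
qed

lemma lap_facts: assumes g: "is_graph n E"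
  shows "poly (char_poly (signless_lap n E)) y = det (y \<cdot>\<^sub>m 1\<^sub>m n - signless_lap n E)"
  and "poly (char_poly (signless_lap (Suc n) (cone_graph n E))) y
        = (y - real n) * det ((y - 1) \<cdot>\<^sub>m 1\<^sub>m n - signless_lap n E) + TT ((y - 1) \<cdot>\<^sub>m 1\<^sub>m n - signless_lap n E)"
  and "poly (char_poly (signless_lap n (compl_graph E))) y
        = (-1)^n * (det ((real n - 2 - y) \<cdot>\<^sub>m 1\<^sub>m n - signless_lap n E) - TT ((real n - 2 - y) \<cdot>\<^sub>m 1\<^sub>m n - signless_lap n E))"
  and "poly (char_poly (signless_lap (Suc n) (compl_graph (cone_graph n E)))) y
        = y * poly (char_poly (signless_lap n (compl_graph E))) y"
proof -
  have C: "y \<cdot>\<^sub>m 1\<^sub>m n - signless_lap n F \<in> carrier_mat n n" for F y by (auto simp: signless_lap_def deg_mat_def adj_mat_def)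
  show "poly (char_poly (signless_lap n E)) y = det (y \<cdot>\<^sub>m 1\<^sub>m n - signless_lap n E)" by (rule cp_eval, simp)
  show "poly (char_poly (signless_lap (Suc n) (cone_graph n E))) y
        = (y - real n) * det ((y - 1) \<cdot>\<^sub>m 1\<^sub>m n - signless_lap n E) + TT ((y - 1) \<cdot>\<^sub>m 1\<^sub>m n - signless_lap n E)"
    by (subst cp_eval[of _ "Suc n"], simp, unfold M_cone_lap bord_det[OF C]) simp
  show "poly (char_poly (signless_lap n (compl_graph E))) y
        = (-1)^n * (det ((real n - 2 - y) \<cdot>\<^sub>m 1\<^sub>m n - signless_lap n E) - TT ((real n - 2 - y) \<cdot>\<^sub>m 1\<^sub>m n - signless_lap n E))"
    by (subst cp_eval[of _ n], simp, unfold M_compl_lap[OF g], rule compl_formula, simp)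
  show "poly (char_poly (signless_lap (Suc n) (compl_graph (cone_graph n E)))) y
        = y * poly (char_poly (signless_lap n (compl_graph E))) y"
    by (subst cp_eval[of _ "Suc n"], simp, subst cp_eval[of _ n], simp, unfold M_compl_cone_lap bord_det[OF C]) simp
qed


definition Mx :: "nat \<Rightarrow> (nat \<Rightarrow> nat \<Rightarrow> bool) \<Rightarrow> real \<Rightarrow> real \<Rightarrow> real mat" where
  "Mx n E lam x = lam \<cdot>\<^sub>m 1\<^sub>m n - adj_mat n E + x \<cdot>\<^sub>m deg_mat n E"

lemma Mx_carrier[simp]: "Mx n E lam x \<in> carrier_mat n n"
  by (auto simp: Mx_def adj_mat_def deg_mat_def)

lemma GA: "gen_char_poly n E lam x y = det (Mx n E lam x) - y * TT (Mx n E lam x)"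
proof -
  have "lam \<cdot>\<^sub>m 1\<^sub>m n - adj_mat n E + x \<cdot>\<^sub>m deg_mat n E + y \<cdot>\<^sub>m ones_mat n = Mx n E lam x - (-y) \<cdot>\<^sub>m ones_mat n"
    by (intro eq_matI) (auto simp: Mx_def adj_mat_def deg_mat_def ones_mat_def)
  thus ?thesis unfolding gen_char_poly_def using det_minus_J[OF Mx_carrier[of n E lam x], of "-y"] by simp
qed

lemma GC: "gen_char_poly n E lam x y = poly (char_poly (adj_mat n E - x \<cdot>\<^sub>m deg_mat n E - y \<cdot>\<^sub>m ones_mat n)) lam"
proof -
  have "lam \<cdot>\<^sub>m 1\<^sub>m n - adj_mat n E + x \<cdot>\<^sub>m deg_mat n E + y \<cdot>\<^sub>m ones_mat n
     = lam \<cdot>\<^sub>m 1\<^sub>m n - (adj_mat n E - x \<cdot>\<^sub>m deg_mat n E - y \<cdot>\<^sub>m ones_mat n)"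
    by (intro eq_matI) (auto simp: adj_mat_def deg_mat_def ones_mat_def)
  thus ?thesis unfolding gen_char_poly_def
    by (subst cp_eval[of _ n]) (auto simp: adj_mat_def deg_mat_def ones_mat_def)
qed

lemma GB: "gen_char_poly (Suc n) (cone_graph n E) lam x y =
   (y - 1)^2 * TT (Mx n E (lam + x) x) + (lam + x * real n + y) * (det (Mx n E (lam + x) x) - y * TT (Mx n E (lam + x) x))"
proof -
  have e: "lam \<cdot>\<^sub>m 1\<^sub>m (Suc n) - adj_mat (Suc n) (cone_graph n E) + x \<cdot>\<^sub>m deg_mat (Suc n) (cone_graph n E) + y \<cdot>\<^sub>m ones_mat (Suc n)
     = bord (Mx n E (lam + x) x - (-y) \<cdot>\<^sub>m ones_mat n) (y - 1) (y - 1) (lam + x * real n + y)"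
    by (intro eq_matI) (auto simp: bord_def Mx_def adj_mat_def deg_mat_def ones_mat_def cone_graph_def
      deg_cone_lt deg_cone_n algebra_simps dest: less_antisym)
  have C: "Mx n E (lam + x) x - (-y) \<cdot>\<^sub>m ones_mat n \<in> carrier_mat n n" by auto
  show ?thesis unfolding gen_char_poly_def e bord_det[OF C] TT_shift[OF Mx_carrier] det_minus_J[OF Mx_carrier]
    by (simp add: power2_eq_square)
qed


lemma part1: assumes g1: "is_graph n1 E1" and g2: "is_graph n2 E2" and n: "n1 = n2"
  shows "(char_poly (adj_mat n1 E1) = char_poly (adj_mat n2 E2) \<and>
          char_poly (adj_mat n1 (compl_graph E1)) = char_poly (adj_mat n2 (compl_graph E2)))
   \<longleftrightarrow> (char_poly (adj_mat (Suc n1) (cone_graph n1 E1)) = char_poly (adj_mat (Suc n2) (cone_graph n2 E2)) \<and>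
        char_poly (adj_mat (Suc n1) (compl_graph (cone_graph n1 E1))) = char_poly (adj_mat (Suc n2) (compl_graph (cone_graph n2 E2))))"
  apply (rule abstract[where s="(-1)^n1" and a=0 and b=0 and c="-1"
     and ?q1.0="\<lambda>y. det (y \<cdot>\<^sub>m 1\<^sub>m n1 - adj_mat n1 E1)" and ?t1.0="\<lambda>y. TT (y \<cdot>\<^sub>m 1\<^sub>m n1 - adj_mat n1 E1)"
     and ?q2.0="\<lambda>y. det (y \<cdot>\<^sub>m 1\<^sub>m n2 - adj_mat n2 E2)" and ?t2.0="\<lambda>y. TT (y \<cdot>\<^sub>m 1\<^sub>m n2 - adj_mat n2 E2)"])
  using adj_facts[OF g1] adj_facts[OF g2] n by simp_all

lemma part2: assumes g1: "is_graph n1 E1" and g2: "is_graph n2 E2" and n: "n1 = n2"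
  shows "(char_poly (signless_lap n1 E1) = char_poly (signless_lap n2 E2) \<and>
          char_poly (signless_lap n1 (compl_graph E1)) = char_poly (signless_lap n2 (compl_graph E2)))
   \<longleftrightarrow> (char_poly (signless_lap (Suc n1) (cone_graph n1 E1)) = char_poly (signless_lap (Suc n2) (cone_graph n2 E2)) \<and>
        char_poly (signless_lap (Suc n1) (compl_graph (cone_graph n1 E1))) = char_poly (signless_lap (Suc n2) (compl_graph (cone_graph n2 E2))))"
  apply (rule abstract[where s="(-1)^n1" and a="real n1" and b=1 and c="real n1 - 2"
     and ?q1.0="\<lambda>y. det (y \<cdot>\<^sub>m 1\<^sub>m n1 - signless_lap n1 E1)" and ?t1.0="\<lambda>y. TT (y \<cdot>\<^sub>m 1\<^sub>m n1 - signless_lap n1 E1)"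
     and ?q2.0="\<lambda>y. det (y \<cdot>\<^sub>m 1\<^sub>m n2 - signless_lap n2 E2)" and ?t2.0="\<lambda>y. TT (y \<cdot>\<^sub>m 1\<^sub>m n2 - signless_lap n2 E2)"])
  using lap_facts[OF g1] lap_facts[OF g2] n by simp_all

lemma part3: "gen_char_poly n1 E1 = gen_char_poly n2 E2 \<longleftrightarrow>
          gen_char_poly (Suc n1) (cone_graph n1 E1) = gen_char_poly (Suc n2) (cone_graph n2 E2)"
proof
  assume h: "gen_char_poly n1 E1 = gen_char_poly n2 E2"
  have "n1 = n2"
  proof -
    have "poly (char_poly (adj_mat n1 E1 - 0 \<cdot>\<^sub>m deg_mat n1 E1 - 0 \<cdot>\<^sub>m ones_mat n1)) y
        = poly (char_poly (adj_mat n2 E2 - 0 \<cdot>\<^sub>m deg_mat n2 E2 - 0 \<cdot>\<^sub>m ones_mat n2)) y" for y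
      using h GC[of n1 E1 y 0 0] GC[of n2 E2 y 0 0] by simp
    hence "char_poly (adj_mat n1 E1 - 0 \<cdot>\<^sub>m deg_mat n1 E1 - 0 \<cdot>\<^sub>m ones_mat n1)
        = char_poly (adj_mat n2 E2 - 0 \<cdot>\<^sub>m deg_mat n2 E2 - 0 \<cdot>\<^sub>m ones_mat n2)" by (rule poly_eq_all)
    thus ?thesis by (rule cp_dim[rotated 2], auto simp: adj_mat_def deg_mat_def)
  qed
  then have n: "n2 = n1" by simp
  have P: "det (Mx n1 E1 l x) = det (Mx n2 E2 l x)" for l x
    using GA[of n1 E1 l x 0] GA[of n2 E2 l x 0] h by simp
  have T: "TT (Mx n1 E1 l x) = TT (Mx n2 E2 l x)" for l x
    using GA[of n1 E1 l x 0] GA[of n2 E2 l x 0] GA[of n1 E1 l x 1] GA[of n2 E2 l x 1] h by simp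
  show "gen_char_poly (Suc n1) (cone_graph n1 E1) = gen_char_poly (Suc n2) (cone_graph n2 E2)"
    by (intro ext, unfold GB P T n, simp)
next
  assume h: "gen_char_poly (Suc n1) (cone_graph n1 E1) = gen_char_poly (Suc n2) (cone_graph n2 E2)"
  have "n1 = n2"
  proof -
    let ?n = "Suc n1" and ?m = "Suc n2"
    have "poly (char_poly (adj_mat ?n (cone_graph n1 E1) - 0 \<cdot>\<^sub>m deg_mat ?n (cone_graph n1 E1) - 0 \<cdot>\<^sub>m ones_mat ?n)) y
        = poly (char_poly (adj_mat ?m (cone_graph n2 E2) - 0 \<cdot>\<^sub>m deg_mat ?m (cone_graph n2 E2) - 0 \<cdot>\<^sub>m ones_mat ?m)) y" for y
      using h GC[of ?n "cone_graph n1 E1" y 0 0] GC[of ?m "cone_graph n2 E2" y 0 0] by simp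
    hence "char_poly (adj_mat ?n (cone_graph n1 E1) - 0 \<cdot>\<^sub>m deg_mat ?n (cone_graph n1 E1) - 0 \<cdot>\<^sub>m ones_mat ?n)
        = char_poly (adj_mat ?m (cone_graph n2 E2) - 0 \<cdot>\<^sub>m deg_mat ?m (cone_graph n2 E2) - 0 \<cdot>\<^sub>m ones_mat ?m)"
      by (rule poly_eq_all)
    hence "?n = ?m" by (rule cp_dim[rotated 2], auto simp: adj_mat_def deg_mat_def)
    thus ?thesis by simp
  qed
  then have n: "n2 = n1" by simp
  have off: "det (Mx n1 E1 l x) = det (Mx n2 E2 l x) \<and> TT (Mx n1 E1 l x) = TT (Mx n2 E2 l x)"
    if l: "l \<noteq> x - x * real n1 - 1" for l x
  proof -
    define u where "u = l - x + x * real n1"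
    have u: "u + 1 \<noteq> 0" using l unfolding u_def by simp
    let ?P1 = "det (Mx n1 E1 l x)" and ?P2 = "det (Mx n2 E2 l x)"
    let ?T1 = "TT (Mx n1 E1 l x)" and ?T2 = "TT (Mx n2 E2 l x)"
    have e0: "?T1 + u * ?P1 = ?T2 + u * ?P2"
      using fun_cong[OF fun_cong[OF fun_cong[OF h, of "l - x"], of x], of 0]
      unfolding GB n u_def by (simp add: power2_eq_square)
    have e1: "(u + 1) * (?P1 - ?T1) = (u + 1) * (?P2 - ?T2)"
      using fun_cong[OF fun_cong[OF fun_cong[OF h, of "l - x"], of x], of 1]
      unfolding GB n u_def by (simp add: algebra_simps)
    have d: "?P1 - ?T1 = ?P2 - ?T2" using e1 u by simp
    have "(u + 1) * ?P1 = (?T1 + u * ?P1) + (?P1 - ?T1)" by (simp add: algebra_simps)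
    also have "\<dots> = (u + 1) * ?P2" using e0 d by (simp add: algebra_simps)
    finally have "?P1 = ?P2" using u by simp
    with d show ?thesis by simp
  qed
  show "gen_char_poly n1 E1 = gen_char_poly n2 E2"
  proof (intro ext)
    fix l x y
    have "char_poly (adj_mat n1 E1 - x \<cdot>\<^sub>m deg_mat n1 E1 - y \<cdot>\<^sub>m ones_mat n1)
        = char_poly (adj_mat n2 E2 - x \<cdot>\<^sub>m deg_mat n2 E2 - y \<cdot>\<^sub>m ones_mat n2)"
    proof (rule poly_eq_off[of "x - x * real n1 - 1"])
      fix l' assume "l' \<noteq> x - x * real n1 - 1"
      from off[OF this] show "poly (char_poly (adj_mat n1 E1 - x \<cdot>\<^sub>m deg_mat n1 E1 - y \<cdot>\<^sub>m ones_mat n1)) l'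
        = poly (char_poly (adj_mat n2 E2 - x \<cdot>\<^sub>m deg_mat n2 E2 - y \<cdot>\<^sub>m ones_mat n2)) l'"
        unfolding GC[symmetric] GA by simp
    qed
    thus "gen_char_poly n1 E1 l x y = gen_char_poly n2 E2 l x y" unfolding GC by simp
  qed
qed

theorem corollary3p3:
  fixes n1 n2 :: nat and E1 E2 :: "nat \<Rightarrow> nat \<Rightarrow> bool"
  assumes "is_graph n1 E1" and "is_graph n2 E2"
  shows "((cospectral (adj_mat n1 E1) (adj_mat n2 E2) \<and>
           cospectral (adj_mat n1 (compl_graph E1)) (adj_mat n2 (compl_graph E2)))
          \<longleftrightarrow>
          (cospectral (adj_mat (n1+1) (cone_graph n1 E1)) (adj_mat (n2+1) (cone_graph n2 E2)) \<and>
           cospectral (adj_mat (n1+1) (compl_graph (cone_graph n1 E1)))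
                      (adj_mat (n2+1) (compl_graph (cone_graph n2 E2)))))
       \<and> ((cospectral (signless_lap n1 E1) (signless_lap n2 E2) \<and>
           cospectral (signless_lap n1 (compl_graph E1)) (signless_lap n2 (compl_graph E2)))
          \<longleftrightarrow>
          (cospectral (signless_lap (n1+1) (cone_graph n1 E1)) (signless_lap (n2+1) (cone_graph n2 E2)) \<and>
           cospectral (signless_lap (n1+1) (compl_graph (cone_graph n1 E1)))
                      (signless_lap (n2+1) (compl_graph (cone_graph n2 E2)))))
       \<and> (gen_char_poly n1 E1 = gen_char_poly n2 E2 \<longleftrightarrow>
          gen_char_poly (n1+1) (cone_graph n1 E1) = gen_char_poly (n2+1) (cone_graph n2 E2))"
proof (cases "n1 = n2")
  case True
  show ?thesis unfolding cospectral_def Suc_eq_plus1[symmetric] using part1[OF assms True] part2[OF assms True] part3[of n1 E1 n2 E2] by blast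
next
  case False
  have d1: "char_poly (adj_mat n1 F1) \<noteq> char_poly (adj_mat n2 F2)" for F1 F2
    using cp_dim[of "adj_mat n1 F1" n1 "adj_mat n2 F2" n2] False by auto
  have d2: "char_poly (adj_mat (Suc n1) F1) \<noteq> char_poly (adj_mat (Suc n2) F2)" for F1 F2
    using cp_dim[of "adj_mat (Suc n1) F1" "Suc n1" "adj_mat (Suc n2) F2" "Suc n2"] False by auto
  have d3: "char_poly (signless_lap n1 F1) \<noteq> char_poly (signless_lap n2 F2)" for F1 F2
    using cp_dim[of "signless_lap n1 F1" n1 "signless_lap n2 F2" n2] False by auto
  have d4: "char_poly (signless_lap (Suc n1) F1) \<noteq> char_poly (signless_lap (Suc n2) F2)" for F1 F2
    using cp_dim[of "signless_lap (Suc n1) F1" "Suc n1" "signless_lap (Suc n2) F2" "Suc n2"] False by auto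
  show ?thesis unfolding cospectral_def Suc_eq_plus1[symmetric] using d1 d2 d3 d4 part3[of n1 E1 n2 E2] by blast
qed

end
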